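(* For any multi-index $I\in\mathbb{N}^6$, any smooth $\mathbb{R}$-valued function $f_1$ and any smooth $\mathbb{C}^2$-valued function $f_2$ on $\mathbb{R}^{1+2}$, we have $$\big|\big[\widehat\Gamma^I(f_1f_2)\big]_-\big|\lesssim\sum_{|I_1|+|I_2|\le|I|}\big|\Gamma^{I_1}f_1\big|\,\big|\big[\widehat\Gamma^{I_2}f_2\big]_-\big|.$$
   Context: On $\mathbb{R}^{1+2}$ with coordinates $(t,x)=(x_0,x_1,x_2)$, $r=|x|$, $\omega_a=x_a/r$ ($a=1,2$). Vector fields: $\Omega=x_1\partial_2-x_2\partial_1$, $L_a=t\partial_a+x_a\partial_t$; modified fields $\widehat\Omega=\Omega-\tfrac12\gamma^1\gamma^2$, $\widehat L_a=L_a-\tfrac12\gamma^0\gamma^a$. Set $(\Gamma_1,\dots,\Gamma_6)=(\partial_t,\partial_1,\partial_2,\Omega,L_1,L_2)$, $(\widehat\Gamma_1,\dots,\widehat\Gamma_6)=(\partial_t,\partial_1,\partial_2,\widehat\Omega,\widehat L_1,\widehat L_2)$, and for $I=(i_1,\dots,i_6)\in\mathbb{N}^6$, $\Gamma^I=\prod_{k=1}^6\Gamma_k^{i_k}$, $\widehat\Gamma^I=\prod_{k=1}^6\widehat\Gamma_k^{i_k}$, $|I|=\sum i_k$. For $\phi:\mathbb{R}^{1+2}\to\mathbb{C}^2$, $[\phi]_-=\phi-\omega_a\gamma^0\gamma^a\phi$ (summation over $a=1,2$). Dirac matrices: $\gamma^0=\begin{pmatrix}1&0\\0&-1\end{pmatrix}$,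 $\gamma^1=\begin{pmatrix}0&1\\-1&0\end{pmatrix}$, $\gamma^2=\begin{pmatrix}0&-i\\-i&0\end{pmatrix}$. The implicit constant depends only on $|I|$. *)

theory Defs
  imports "HOL-Analysis.Analysis"
begin

text \<open>Points of R^(1+2) are triples (t, x1, x2).\<close>
type_synonym pt = "real \<times> real \<times> real"

definition tc :: "pt \<Rightarrow> real" where "tc p = fst p"
definition xc :: "nat \<Rightarrow> pt \<Rightarrow> real" where
  "xc a p = (if a = 1 then fst (snd p) else snd (snd p))"
definition rad :: "pt \<Rightarrow> real" where "rad p = sqrt ((xc 1 p)^2 + (xc 2 p)^2)"
definition om :: "nat \<Rightarrow> pt \<Rightarrow> real" where "om a p = xc a p / rad p"

definition edir :: "nat \<Rightarrow> pt" where
  "edir k = (if k = 0 then (1,0,0) else if k = 1 then (0,1,0) else (0,0,1))"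

definition partial :: "(pt \<Rightarrow> 'a::real_normed_vector) \<Rightarrow> pt \<Rightarrow> pt \<Rightarrow> 'a" where
  "partial f v p = vector_derivative (\<lambda>s. f (p + s *\<^sub>R v)) (at 0)"

fun iter_partial :: "nat list \<Rightarrow> (pt \<Rightarrow> 'a::real_normed_vector) \<Rightarrow> pt \<Rightarrow> 'a" where
  "iter_partial [] f = f"
| "iter_partial (k # ks) f = partial (iter_partial ks f) (edir k)"

definition smooth :: "(pt \<Rightarrow> 'a::real_normed_vector) \<Rightarrow> bool" where
  "smooth f \<longleftrightarrow> (\<forall>ks. set ks \<subseteq> {0,1,2} \<longrightarrow> (\<forall>p. iter_partial ks f differentiable (at p)))"

definition gamma0 :: "complex^2^2" where "gamma0 = vector [vector [1, 0], vector [0, -1]]"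
definition gamma1 :: "complex^2^2" where "gamma1 = vector [vector [0, 1], vector [-1, 0]]"
definition gamma2 :: "complex^2^2" where "gamma2 = vector [vector [0, -\<i>], vector [-\<i>, 0]]"
definition gam :: "nat \<Rightarrow> complex^2^2" where
  "gam a = (if a = 1 then gamma1 else gamma2)"

text \<open>Unmodified vector fields Gamma_1..Gamma_6 = (d_t, d_1, d_2, Omega, L_1, L_2), indexed 0..5.\<close>
definition VF :: "nat \<Rightarrow> (pt \<Rightarrow> 'a::real_normed_vector) \<Rightarrow> pt \<Rightarrow> 'a" where
  "VF k f p =
    (if k = 0 then partial f (edir 0) p
     else if k = 1 then partial f (edir 1) p
     else if k = 2 then partial f (edir 2) p
     else if k = 3 then xc 1 p *\<^sub>R partial f (edir 2) p - xc 2 p *\<^sub>R partial f (edir 1) p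
     else if k = 4 then tc p *\<^sub>R partial f (edir 1) p + xc 1 p *\<^sub>R partial f (edir 0) p
     else tc p *\<^sub>R partial f (edir 2) p + xc 2 p *\<^sub>R partial f (edir 0) p)"

definition VFh :: "nat \<Rightarrow> (pt \<Rightarrow> complex^2) \<Rightarrow> pt \<Rightarrow> complex^2" where
  "VFh k f p =
    (if k = 3 then VF k f p - (1/2 :: complex) *s ((gamma1 ** gamma2) *v f p)
     else if k = 4 then VF k f p - (1/2 :: complex) *s ((gamma0 ** gamma1) *v f p)
     else if k = 5 then VF k f p - (1/2 :: complex) *s ((gamma0 ** gamma2) *v f p)
     else VF k f p)"

text \<open>Multi-indices I = [i_1,...,i_6] (lists of length 6); Gamma^I = prod_k Gamma_k^(i_k),
  the leftmost factor Gamma_1^(i_1) being applied last.\<close>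
definition mi_word :: "nat list \<Rightarrow> nat list" where
  "mi_word I = concat (map (\<lambda>k. replicate (I ! k) k) [0..<6])"

definition GammaI :: "nat list \<Rightarrow> (pt \<Rightarrow> 'a::real_normed_vector) \<Rightarrow> pt \<Rightarrow> 'a" where
  "GammaI I f = foldr VF (mi_word I) f"

definition GammaIh :: "nat list \<Rightarrow> (pt \<Rightarrow> complex^2) \<Rightarrow> pt \<Rightarrow> complex^2" where
  "GammaIh I f = foldr VFh (mi_word I) f"

definition minus_part :: "pt \<Rightarrow> complex^2 \<Rightarrow> complex^2" where
  "minus_part p v = v - (\<Sum>a\<in>{1,2::nat}. complex_of_real (om a p) *s ((gamma0 ** gam a) *v v))"

end

theory Submission imports Defs "HOL-Library.Multiset" begin


lemma partial_has:
  fixes f :: "pt \<Rightarrow> 'a::real_normed_vector"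
  assumes "f differentiable (at p)"
  shows "((\<lambda>s. f (p + s *\<^sub>R v)) has_vector_derivative partial f v p) (at 0)"
proof -
  have d1: "(\<lambda>s::real. p + s *\<^sub>R v) differentiable (at 0)"
    by (intro derivative_intros)
  have "(f \<circ> (\<lambda>s::real. p + s *\<^sub>R v)) differentiable (at 0)"
    by (rule differentiable_chain_at[OF d1]) (simp add: assms)
  then have "(\<lambda>s. f (p + s *\<^sub>R v)) differentiable (at 0)" by (simp add: o_def)
  then show ?thesis unfolding partial_def using vector_derivative_works by blast
qed

lemma partial_add:
  fixes f g :: "pt \<Rightarrow> 'a::real_normed_vector"
  assumes "f differentiable (at p)" "g differentiable (at p)"
  shows "partial (\<lambda>q. f q + g q) v p = partial f v p + partial g v p"
  unfolding partial_def[of "\<lambda>q. f q + g q"]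
  by (intro vector_derivative_at has_vector_derivative_add partial_has assms)

lemma partial_scaleR:
  fixes g :: "pt \<Rightarrow> real" and h :: "pt \<Rightarrow> 'a::real_normed_vector"
  assumes "g differentiable (at p)" "h differentiable (at p)"
  shows "partial (\<lambda>q. g q *\<^sub>R h q) v p = partial g v p *\<^sub>R h p + g p *\<^sub>R partial h v p"
proof -
  have a: "((\<lambda>s. g (p + s *\<^sub>R v)) has_field_derivative partial g v p) (at 0)"
    using partial_has[OF assms(1)] by (simp add: has_real_derivative_iff_has_vector_derivative)
  have "((\<lambda>s. g (p + s *\<^sub>R v) *\<^sub>R h (p + s *\<^sub>R v)) has_vector_derivative
     (g (p + 0 *\<^sub>R v) *\<^sub>R partial h v p + partial g v p *\<^sub>R h (p + 0 *\<^sub>R v))) (at 0)"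
    by (rule has_vector_derivative_scaleR[OF a partial_has[OF assms(2)]])
  then show ?thesis unfolding partial_def[of "\<lambda>q. g q *\<^sub>R h q"]
    by (intro vector_derivative_at) (simp add: add.commute)
qed

lemma partial_linear:
  fixes f :: "pt \<Rightarrow> 'a::real_normed_vector" and L :: "'a \<Rightarrow> 'b::real_normed_vector"
  assumes "bounded_linear L" "f differentiable (at p)"
  shows "partial (\<lambda>q. L (f q)) v p = L (partial f v p)"
  unfolding partial_def[of "\<lambda>q. L (f q)"]
  by (intro vector_derivative_at bounded_linear.has_vector_derivative[OF assms(1)] partial_has assms(2))

lemma differentiable_sum_list:
  fixes F :: "'i \<Rightarrow> pt \<Rightarrow> 'a::real_normed_vector"
  assumes "\<And>x. x \<in> set xs \<Longrightarrow> F x differentiable (at p)"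
  shows "(\<lambda>q. \<Sum>x\<leftarrow>xs. F x q) differentiable (at p)"
  using assms
proof (induction xs)
  case Nil then show ?case by simp
next
  case (Cons b ys)
  have "(\<lambda>q. F b q + (\<Sum>x\<leftarrow>ys. F x q)) differentiable (at p)"
    by (rule differentiable_add) (use Cons in auto)
  then show ?case by simp
qed

lemma partial_sum_list:
  fixes F :: "'i \<Rightarrow> pt \<Rightarrow> 'a::real_normed_vector"
  assumes "\<And>x. x \<in> set xs \<Longrightarrow> F x differentiable (at p)"
  shows "partial (\<lambda>q. \<Sum>x\<leftarrow>xs. F x q) v p = (\<Sum>x\<leftarrow>xs. partial (F x) v p)"
  using assms
proof (induction xs)
  case Nil
  show ?case unfolding partial_def by (intro vector_derivative_at) (simp add: has_vector_derivative_const)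
next
  case (Cons a xs)
  have d: "(\<lambda>q. \<Sum>x\<leftarrow>xs. F x q) differentiable (at p)"
    using Cons.prems by (intro differentiable_sum_list) auto
  have "partial (\<lambda>q. F a q + (\<Sum>x\<leftarrow>xs. F x q)) v p = partial (F a) v p + partial (\<lambda>q. \<Sum>x\<leftarrow>xs. F x q) v p"
    by (rule partial_add) (use Cons.prems d in auto)
  then show ?case using Cons by simp
qed

lemma partial_const: "partial (\<lambda>q. c) v p = 0"
  unfolding partial_def by (intro vector_derivative_at) (simp add: has_vector_derivative_const)

lemma partial_bl:
  assumes "bounded_linear L"
  shows "partial L v p = L v"
proof -
  interpret bounded_linear L by fact
  have "((\<lambda>s. L (p + s *\<^sub>R v)) has_vector_derivative L v) (at 0)"
    unfolding add scaleR
    by (auto intro!: derivative_eq_intros)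
  then show ?thesis unfolding partial_def by (rule vector_derivative_at)
qed

lemma scaleR_sum_list: fixes f :: "'i \<Rightarrow> 'a::real_vector" shows "r *\<^sub>R (\<Sum>x\<leftarrow>xs. f x) = (\<Sum>x\<leftarrow>xs. r *\<^sub>R f x)"
  by (induction xs) (auto simp: scaleR_right_distrib)

lemma bl_sum_list: "bounded_linear L \<Longrightarrow> L (\<Sum>x\<leftarrow>xs. f x) = (\<Sum>x\<leftarrow>xs. L (f x))"
  by (induction xs) (auto simp: linear_simps)

lemma iter_partial_snoc: "iter_partial (ks @ [k]) f = iter_partial ks (partial f (edir k))"
  by (induction ks) auto

lemma smooth_iter: "smooth f \<Longrightarrow> set ks \<subseteq> {0,1,2} \<Longrightarrow> iter_partial ks f differentiable (at p)"
  unfolding smooth_def by blast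

lemma smooth_diffb: "smooth f \<Longrightarrow> f differentiable (at p)"
  using smooth_iter[of f "[]"] by simp

lemma smooth_partial:
  assumes "smooth f" "k \<in> {0,1,2}" shows "smooth (partial f (edir k))"
  unfolding smooth_def
proof (intro allI impI)
  fix ks p assume ks: "set ks \<subseteq> {0::nat,1,2}"
  have "set (ks @ [k]) \<subseteq> {0,1,2}" using ks assms(2) by simp
  then have "iter_partial (ks @ [k]) f differentiable (at p)" by (rule smooth_iter[OF assms(1)])
  then show "iter_partial ks (partial f (edir k)) differentiable (at p)" by (simp add: iter_partial_snoc)
qed

lemma iter_partial_add:
  assumes "smooth f" "smooth g" "set ks \<subseteq> {0,1,2}"
  shows "iter_partial ks (\<lambda>q. f q + g q) = (\<lambda>q. iter_partial ks f q + iter_partial ks g q)"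
  using assms(3)
proof (induction ks)
  case Nil then show ?case by simp
next
  case (Cons k ks)
  have ks: "set ks \<subseteq> {0,1,2}" using Cons.prems by simp
  show ?case
  proof
    fix p
    have "iter_partial (k # ks) (\<lambda>q. f q + g q) p = partial (\<lambda>q. iter_partial ks f q + iter_partial ks g q) (edir k) p"
      by (simp only: iter_partial.simps Cons.IH[OF ks])
    also have "\<dots> = partial (iter_partial ks f) (edir k) p + partial (iter_partial ks g) (edir k) p"
      by (rule partial_add; rule smooth_iter[OF _ ks]; rule assms)
    finally show "iter_partial (k # ks) (\<lambda>q. f q + g q) p = iter_partial (k # ks) f p + iter_partial (k # ks) g p"
      by simp
  qed
qed

lemma smooth_add:
  assumes "smooth f" "smooth g" shows "smooth (\<lambda>q. f q + g q)"
  unfolding smooth_def[of "\<lambda>q. f q + g q"]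
proof (intro allI impI)
  fix ks p assume ks: "set ks \<subseteq> {0::nat,1,2}"
  show "iter_partial ks (\<lambda>q. f q + g q) differentiable (at p)"
    unfolding iter_partial_add[OF assms ks]
    by (rule differentiable_add; rule smooth_iter[OF _ ks]; rule assms)
qed

lemma iter_partial_lin:
  assumes "bounded_linear L" "smooth f" "set ks \<subseteq> {0,1,2}"
  shows "iter_partial ks (\<lambda>q. L (f q)) = (\<lambda>q. L (iter_partial ks f q))"
  using assms(3)
proof (induction ks)
  case Nil then show ?case by simp
next
  case (Cons k ks)
  have ks: "set ks \<subseteq> {0,1,2}" using Cons.prems by simp
  show ?case
  proof
    fix p
    have "iter_partial (k # ks) (\<lambda>q. L (f q)) p = partial (\<lambda>q. L (iter_partial ks f q)) (edir k) p"
      by (simp only: iter_partial.simps Cons.IH[OF ks])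
    also have "\<dots> = L (partial (iter_partial ks f) (edir k) p)"
      by (rule partial_linear[OF assms(1)]; rule smooth_iter[OF _ ks]; rule assms)
    finally show "iter_partial (k # ks) (\<lambda>q. L (f q)) p = L (iter_partial (k # ks) f p)"
      by simp
  qed
qed

lemma smooth_lin:
  assumes "bounded_linear L" "smooth f" shows "smooth (\<lambda>q. L (f q))"
  unfolding smooth_def[of "\<lambda>q. L (f q)"]
proof (intro allI impI)
  fix ks p assume ks: "set ks \<subseteq> {0::nat,1,2}"
  have d: "iter_partial ks f differentiable (at p)" by (rule smooth_iter[OF assms(2) ks])
  have "(L \<circ> iter_partial ks f) differentiable (at p)"
    by (rule differentiable_chain_at[OF d bounded_linear_imp_differentiable[OF assms(1)]])
  then show "iter_partial ks (\<lambda>q. L (f q)) differentiable (at p)"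
    unfolding iter_partial_lin[OF assms ks] by (simp add: o_def)
qed

lemma smooth_diff: "smooth f \<Longrightarrow> smooth g \<Longrightarrow> smooth (\<lambda>q. f q - g q)"
proof -
  assume a: "smooth f" "smooth g"
  have "smooth (\<lambda>q. - g q)" by (rule smooth_lin[OF bounded_linear_minus[OF bounded_linear_ident] a(2)])
  from smooth_add[OF a(1) this] show ?thesis by simp
qed

fun splits :: "nat list \<Rightarrow> (nat list \<times> nat list) list" where
  "splits [] = [([],[])]"
| "splits (k#ks) = concat (map (\<lambda>ab. [(k # fst ab, snd ab), (fst ab, k # snd ab)]) (splits ks))"

lemma sum_concat_splits:
  "(\<Sum>ab\<leftarrow>concat (map (\<lambda>ab. [(k # fst ab, snd ab), (fst ab, k # snd ab)]) xs). G ab)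
   = (\<Sum>ab\<leftarrow>xs. G (k # fst ab, snd ab) + G (fst ab, k # snd ab))"
  by (induction xs) (auto simp: algebra_simps)

lemma splits_set: "ab \<in> set (splits ks) \<Longrightarrow> set (fst ab) \<subseteq> set ks \<and> set (snd ab) \<subseteq> set ks"
proof (induction ks arbitrary: ab)
  case Nil then show ?case by simp
next
  case (Cons k ks)
  then obtain cd where cd: "cd \<in> set (splits ks)" "ab = (k # fst cd, snd cd) \<or> ab = (fst cd, k # snd cd)"
    by auto
  from Cons.IH[OF cd(1)] cd(2) show ?case by auto
qed

lemma smooth_iter_splits:
  assumes "smooth f" "set ks \<subseteq> {0,1,2}" "ab \<in> set (splits ks)"
  shows "iter_partial (fst ab) f differentiable (at p)" "iter_partial (snd ab) f differentiable (at p)"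
  using splits_set[OF assms(3)] assms(2) by (auto intro!: smooth_iter[OF assms(1)])

lemma length_splits: "length (splits ks) = 2 ^ length ks"
proof (induction ks)
  case Nil then show ?case by simp
next
  case (Cons k ks)
  have "length (concat (map (\<lambda>ab. [(k # fst ab, snd ab), (fst ab, k # snd ab)]) xs)) = 2 * length xs"
    for xs :: "(nat list \<times> nat list) list" by (induction xs) auto
  then show ?case using Cons by simp
qed

lemma iter_leibniz:
  fixes g :: "pt \<Rightarrow> real" and h :: "pt \<Rightarrow> 'a::real_normed_vector"
  assumes "smooth g" "smooth h" "set ks \<subseteq> {0,1,2}"
  shows "iter_partial ks (\<lambda>q. g q *\<^sub>R h q) =
     (\<lambda>q. \<Sum>ab\<leftarrow>splits ks. iter_partial (fst ab) g q *\<^sub>R iter_partial (snd ab) h q)"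
  using assms(3)
proof (induction ks)
  case Nil then show ?case by simp
next
  case (Cons k ks)
  have ks: "set ks \<subseteq> {0,1,2}" using Cons.prems by auto
  show ?case
  proof
    fix q
    have "iter_partial (k # ks) (\<lambda>q. g q *\<^sub>R h q) q =
      partial (\<lambda>q. \<Sum>ab\<leftarrow>splits ks. iter_partial (fst ab) g q *\<^sub>R iter_partial (snd ab) h q) (edir k) q"
      using Cons.IH[OF ks] by simp
    also have "\<dots> = (\<Sum>ab\<leftarrow>splits ks. partial (\<lambda>q. iter_partial (fst ab) g q *\<^sub>R iter_partial (snd ab) h q) (edir k) q)"
      by (rule partial_sum_list) (use ks assms in \<open>auto intro!: differentiable_scaleR smooth_iter_splits\<close>)
    also have "\<dots> = (\<Sum>ab\<leftarrow>splits ks. iter_partial (k # fst ab) g q *\<^sub>R iter_partial (snd ab) h q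
          + iter_partial (fst ab) g q *\<^sub>R iter_partial (k # snd ab) h q)"
      by (intro arg_cong[where f=sum_list] map_cong refl)
         (use ks assms in \<open>auto simp: partial_scaleR smooth_iter_splits\<close>)
    also have "\<dots> = (\<Sum>ab\<leftarrow>splits (k # ks). iter_partial (fst ab) g q *\<^sub>R iter_partial (snd ab) h q)"
      by (simp only: splits.simps sum_concat_splits fst_conv snd_conv)
    finally show "iter_partial (k # ks) (\<lambda>q. g q *\<^sub>R h q) q = (\<Sum>ab\<leftarrow>splits (k # ks). iter_partial (fst ab) g q *\<^sub>R iter_partial (snd ab) h q)" .
  qed
qed

lemma smooth_scaleR:
  fixes g :: "pt \<Rightarrow> real" and h :: "pt \<Rightarrow> 'a::real_normed_vector"
  assumes "smooth g" "smooth h"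
  shows "smooth (\<lambda>q. g q *\<^sub>R h q)"
  unfolding smooth_def[of "\<lambda>q. g q *\<^sub>R h q"]
proof (intro allI impI)
  fix ks p assume ks: "set ks \<subseteq> {0::nat,1,2}"
  show "iter_partial ks (\<lambda>q. g q *\<^sub>R h q) differentiable at p"
    unfolding iter_leibniz[OF assms ks]
    by (rule differentiable_sum_list) (use ks assms in \<open>auto intro!: differentiable_scaleR smooth_iter_splits\<close>)
qed

lemma iter_partial_bl:
  assumes "bounded_linear L"
  shows "(iter_partial ks L = L \<and> ks = []) \<or> (\<exists>c. iter_partial ks L = (\<lambda>_. c))"
proof (induction ks)
  case Nil then show ?case by simp
next
  case (Cons k ks)
  then show ?case
  proof
    assume "iter_partial ks L = L \<and> ks = []"
    then show ?thesis using partial_bl[OF assms] by auto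
  next
    assume "\<exists>c. iter_partial ks L = (\<lambda>_. c)"
    then obtain c where eq: "iter_partial ks L = (\<lambda>_. c)" by blast
    have "\<exists>c. iter_partial (k # ks) L = (\<lambda>_. c)"
      by (intro exI[of _ 0] ext) (simp add: eq partial_const)
    then show ?thesis by blast
  qed
qed

lemma smooth_bl:
  assumes "bounded_linear L" shows "smooth L"
  unfolding smooth_def
proof (intro allI impI)
  fix ks p
  from iter_partial_bl[OF assms, of ks]
  show "iter_partial ks L differentiable (at p)"
  proof
    assume "iter_partial ks L = L \<and> ks = []"
    then show ?thesis using bounded_linear_imp_differentiable[OF assms] by simp
  next
    assume "\<exists>c. iter_partial ks L = (\<lambda>_. c)"
    then obtain c where "iter_partial ks L = (\<lambda>_. c)" by blast
    then show ?thesis by simp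
  qed
qed

lemma smooth_tc: "smooth tc"
  unfolding tc_def by (intro smooth_bl bounded_linear_fst)

lemma smooth_xc: "smooth (xc a)"
proof -
  have "bounded_linear (\<lambda>p::pt. fst (snd p))" "bounded_linear (\<lambda>p::pt. snd (snd p))"
    by (auto intro!: bounded_linear_compose[OF bounded_linear_fst bounded_linear_snd]
          bounded_linear_compose[OF bounded_linear_snd bounded_linear_snd])
  then show ?thesis unfolding xc_def[abs_def] by (cases "a = 1") (auto intro: smooth_bl)
qed



lemma lin_cs: "linear (\<lambda>v::complex^2. c *s (M *v v))"
  apply (rule linearI)
   apply (simp add: vec_eq_iff matrix_vector_mult_def sum_distrib_left algebra_simps sum.distrib)
  apply (simp add: vec_eq_iff matrix_vector_mult_def vector_scaleR_component)
  apply (simp add: scaleR_conv_of_real sum_distrib_left algebra_simps)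
  done

lemma bl_cs: "bounded_linear (\<lambda>v::complex^2. c *s (M *v v))"
  using lin_cs linear_conv_bounded_linear by blast

lemma bl_minus_part: "bounded_linear (minus_part p)"
proof -
  have "linear (\<lambda>v::complex^2. v - (\<Sum>a\<in>{1,2::nat}. complex_of_real (om a p) *s ((gamma0 ** gam a) *v v)))"
    by (intro linear_compose_sub linear_ident linear_compose_sum lin_cs ballI)
  then show ?thesis unfolding minus_part_def[abs_def] by (rule linear_conv_bounded_linear[THEN iffD1])
qed



definition Mk :: "nat \<Rightarrow> complex^2^2" where
  "Mk k = (if k = 3 then gamma1 ** gamma2 else if k = 4 then gamma0 ** gamma1 else gamma0 ** gamma2)"

definition Lm :: "complex^2^2 \<Rightarrow> complex^2 \<Rightarrow> complex^2" where
  "Lm M v = (1/2 :: complex) *s (M *v v)"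

lemma bl_Lm: "bounded_linear (Lm M)"
  unfolding Lm_def[abs_def] by (rule bl_cs)

lemma VFh_alt: "VFh k F p = (if k \<in> {3,4,5} then VF k F p - Lm (Mk k) (F p) else VF k F p)"
  by (simp add: VFh_def Lm_def Mk_def)

lemma smooth_VF:
  assumes "smooth f"
  shows "smooth (VF k f)"
proof -
  have P: "smooth (partial f (edir j))" if "j \<in> {0,1,2}" for j using smooth_partial[OF assms that] .
  consider "k = 0" | "k = 1" | "k = 2" | "k = 3" | "k = 4" | "k \<ge> 5" by linarith
  then show ?thesis
  proof cases
    case 1
    then have "VF k f = partial f (edir 0)" by (auto simp: VF_def fun_eq_iff)
    then show ?thesis using P by simp
  next
    case 2
    then have "VF k f = partial f (edir 1)" by (auto simp: VF_def fun_eq_iff)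
    then show ?thesis using P by simp
  next
    case 3
    then have "VF k f = partial f (edir 2)" by (auto simp: VF_def fun_eq_iff)
    then show ?thesis using P by simp
  next
    case 4
    then have "VF k f = (\<lambda>p. xc 1 p *\<^sub>R partial f (edir 2) p - xc 2 p *\<^sub>R partial f (edir 1) p)"
      by (auto simp: VF_def fun_eq_iff)
    then show ?thesis using P by (simp add: smooth_diff smooth_scaleR smooth_xc)
  next
    case 5
    then have "VF k f = (\<lambda>p. tc p *\<^sub>R partial f (edir 1) p + xc 1 p *\<^sub>R partial f (edir 0) p)"
      by (auto simp: VF_def fun_eq_iff)
    then show ?thesis using P by (simp add: smooth_add smooth_scaleR smooth_xc smooth_tc)
  next
    case 6
    then have "VF k f = (\<lambda>p. tc p *\<^sub>R partial f (edir 2) p + xc 2 p *\<^sub>R partial f (edir 0) p)"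
      by (auto simp: VF_def fun_eq_iff)
    then show ?thesis using P by (simp add: smooth_add smooth_scaleR smooth_xc smooth_tc)
  qed
qed

lemma smooth_VFh:
  assumes "smooth f"
  shows "smooth (VFh k f)"
proof (cases "k \<in> {3,4,5}")
  case True
  then have "VFh k f = (\<lambda>p. VF k f p - Lm (Mk k) (f p))" by (simp add: VFh_alt fun_eq_iff)
  then show ?thesis using smooth_diff[OF smooth_VF[OF assms] smooth_lin[OF bl_Lm assms]] by simp
next
  case False
  then have "VFh k f = VF k f" by (simp add: VFh_alt fun_eq_iff)
  then show ?thesis using smooth_VF[OF assms] by simp
qed

lemma smooth_foldr_VF: "smooth f \<Longrightarrow> smooth (foldr VF a f)"
  by (induction a) (auto intro: smooth_VF)

lemma smooth_foldr_VFh: "smooth f \<Longrightarrow> smooth (foldr VFh a f)"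
  by (induction a) (auto intro: smooth_VFh)

lemma VF_add:
  assumes "A differentiable (at p)" "B differentiable (at p)"
  shows "VF k (\<lambda>q. A q + B q) p = VF k A p + VF k B p"
  unfolding VF_def using partial_add[OF assms]
  by (simp add: algebra_simps)

lemma VF_zero: "VF k (\<lambda>q. 0) p = 0"
  unfolding VF_def by (simp add: partial_const)

lemma VF_sum_list:
  fixes F :: "'i \<Rightarrow> pt \<Rightarrow> 'a::real_normed_vector"
  assumes "\<And>x. x \<in> set xs \<Longrightarrow> F x differentiable (at p)"
  shows "VF k (\<lambda>q. \<Sum>x\<leftarrow>xs. F x q) p = (\<Sum>x\<leftarrow>xs. VF k (F x) p)"
  using assms
proof (induction xs)
  case Nil then show ?case using VF_zero by simp
next
  case (Cons a xs)
  have "VF k (\<lambda>q. F a q + (\<Sum>x\<leftarrow>xs. F x q)) p = VF k (F a) p + VF k (\<lambda>q. \<Sum>x\<leftarrow>xs. F x q) p"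
    by (rule VF_add) (use Cons.prems in \<open>auto intro: differentiable_sum_list\<close>)
  then show ?case using Cons by simp
qed

lemma VF_scaleR:
  fixes g :: "pt \<Rightarrow> real" and h :: "pt \<Rightarrow> 'a::real_normed_vector"
  assumes "g differentiable (at p)" "h differentiable (at p)"
  shows "VF k (\<lambda>q. g q *\<^sub>R h q) p = VF k g p *\<^sub>R h p + g p *\<^sub>R VF k h p"
  unfolding VF_def using partial_scaleR[OF assms]
  by (simp add: algebra_simps)

lemma VFh_sum_list:
  fixes F :: "'i \<Rightarrow> pt \<Rightarrow> complex^2"
  assumes "\<And>x. x \<in> set xs \<Longrightarrow> F x differentiable (at p)"
  shows "VFh k (\<lambda>q. \<Sum>x\<leftarrow>xs. F x q) p = (\<Sum>x\<leftarrow>xs. VFh k (F x) p)"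
proof -
  have "VF k (\<lambda>q. \<Sum>x\<leftarrow>xs. F x q) p = (\<Sum>x\<leftarrow>xs. VF k (F x) p)"
    by (rule VF_sum_list) (rule assms)
  then show ?thesis using bl_sum_list[OF bl_Lm, of "Mk k" "\<lambda>x. F x p" xs]
    by (simp add: VFh_alt sum_list_subtractf)
qed

lemma VFh_scaleR:
  fixes g :: "pt \<Rightarrow> real" and h :: "pt \<Rightarrow> complex^2"
  assumes "g differentiable (at p)" "h differentiable (at p)"
  shows "VFh k (\<lambda>q. g q *\<^sub>R h q) p = VF k g p *\<^sub>R h p + g p *\<^sub>R VFh k h p"
  unfolding VFh_alt VF_scaleR[OF assms] linear_simps(5)[OF bl_Lm]
  by (simp add: algebra_simps)

lemma foldr_leibniz:
  fixes f1 :: "pt \<Rightarrow> real" and f2 :: "pt \<Rightarrow> complex^2"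
  assumes "smooth f1" "smooth f2"
  shows "foldr VFh w (\<lambda>q. f1 q *\<^sub>R f2 q) =
     (\<lambda>q. \<Sum>ab\<leftarrow>splits w. foldr VF (fst ab) f1 q *\<^sub>R foldr VFh (snd ab) f2 q)"
proof (induction w)
  case Nil then show ?case by simp
next
  case (Cons k w)
  have D1: "foldr VF a f1 differentiable (at q)" for a q
    using smooth_diffb[OF smooth_foldr_VF[OF assms(1)]] .
  have D2: "foldr VFh a f2 differentiable (at q)" for a q
    using smooth_diffb[OF smooth_foldr_VFh[OF assms(2)]] .
  show ?case
  proof
    fix q
    have "foldr VFh (k # w) (\<lambda>q. f1 q *\<^sub>R f2 q) q =
      VFh k (\<lambda>q. \<Sum>ab\<leftarrow>splits w. foldr VF (fst ab) f1 q *\<^sub>R foldr VFh (snd ab) f2 q) q"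
      using Cons.IH by simp
    also have "\<dots> = (\<Sum>ab\<leftarrow>splits w. VFh k (\<lambda>q. foldr VF (fst ab) f1 q *\<^sub>R foldr VFh (snd ab) f2 q) q)"
      by (rule VFh_sum_list) (auto intro!: differentiable_scaleR D1 D2)
    also have "\<dots> = (\<Sum>ab\<leftarrow>splits w. foldr VF (k # fst ab) f1 q *\<^sub>R foldr VFh (snd ab) f2 q
          + foldr VF (fst ab) f1 q *\<^sub>R foldr VFh (k # snd ab) f2 q)"
      by (intro arg_cong[where f=sum_list] map_cong refl) (simp add: VFh_scaleR D1 D2)
    also have "\<dots> = (\<Sum>ab\<leftarrow>splits (k # w). foldr VF (fst ab) f1 q *\<^sub>R foldr VFh (snd ab) f2 q)"
      by (simp only: splits.simps sum_concat_splits fst_conv snd_conv)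
    finally show "foldr VFh (k # w) (\<lambda>q. f1 q *\<^sub>R f2 q) q = (\<Sum>ab\<leftarrow>splits (k # w). foldr VF (fst ab) f1 q *\<^sub>R foldr VFh (snd ab) f2 q)" .
  qed
qed



lemma splits_props:
  "ab \<in> set (splits ks) \<Longrightarrow> set (fst ab) \<subseteq> set ks \<and> set (snd ab) \<subseteq> set ks
     \<and> length (fst ab) + length (snd ab) = length ks
     \<and> (sorted ks \<longrightarrow> sorted (fst ab) \<and> sorted (snd ab))"
proof (induction ks arbitrary: ab)
  case Nil then show ?case by simp
next
  case (Cons k ks)
  then obtain cd where cd: "cd \<in> set (splits ks)" "ab = (k # fst cd, snd cd) \<or> ab = (fst cd, k # snd cd)"
    by auto
  from Cons.IH[OF cd(1)] cd(2) show ?case by (auto simp: subset_iff)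
qed

lemma cw_sorted: "sorted (concat (map (\<lambda>k. replicate (f k) k) [0..<n]))"
  by (induction n) (auto simp: sorted_append)

lemma cw_set: "set (concat (map (\<lambda>k. replicate (f k) k) [0..<n])) \<subseteq> {..<n}"
  by (induction n) auto

lemma cw_count: "count (mset (concat (map (\<lambda>k. replicate (f k) (k::nat)) [0..<n]))) x = (if x < n then f x else 0)"
  by (induction n) auto

lemma mi_word_length: "length I = 6 \<Longrightarrow> length (mi_word I) = sum_list I"
proof -
  assume "length I = 6"
  then have "map (\<lambda>k. I ! k) [0..<6] = I" by (metis map_nth)
  then show ?thesis unfolding mi_word_def by (simp add: length_concat o_def)
qed

lemma sorted_is_mi_word:
  assumes "sorted a" "set a \<subseteq> {..<6}"
  shows "\<exists>I1. length I1 = 6 \<and> a = mi_word I1"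
proof -
  define I1 where "I1 = map (\<lambda>k. count (mset a) k) [0..<6]"
  have c: "count (mset (mi_word I1)) x = count (mset a) x" for x
  proof (cases "x < 6")
    case True then show ?thesis unfolding mi_word_def cw_count by (simp add: I1_def)
  next
    case False
    then have "x \<notin> set a" using assms(2) by auto
    then show ?thesis using False unfolding mi_word_def cw_count by (simp add: count_mset_0_iff)
  qed
  have m: "mset (mi_word I1) = mset a" using c by (simp add: multiset_eq_iff)
  have s: "sorted (mi_word I1)" unfolding mi_word_def by (rule cw_sorted)
  have "sort a = mi_word I1" by (rule properties_for_sort[OF m s])
  then have "a = mi_word I1" using sorted_sort_id[OF assms(1)] by simp
  moreover have "length I1 = 6" by (simp add: I1_def)
  ultimately show ?thesis by blast
qed

lemma splits_mi:
  assumes "length I = 6" "ab \<in> set (splits (mi_word I))"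
  shows "\<exists>I1 I2. length I1 = 6 \<and> length I2 = 6 \<and> fst ab = mi_word I1 \<and> snd ab = mi_word I2
          \<and> sum_list I1 + sum_list I2 = sum_list I"
proof -
  have st: "sorted (mi_word I)" unfolding mi_word_def by (rule cw_sorted)
  have se: "set (mi_word I) \<subseteq> {..<6}" unfolding mi_word_def by (rule cw_set)
  note P = splits_props[OF assms(2)]
  obtain I1 where I1: "length I1 = 6" "fst ab = mi_word I1"
    using sorted_is_mi_word[of "fst ab"] P st se by blast
  obtain I2 where I2: "length I2 = 6" "snd ab = mi_word I2"
    using sorted_is_mi_word[of "snd ab"] P st se by blast
  have "sum_list I1 + sum_list I2 = sum_list I"
    using P I1 I2 mi_word_length[OF assms(1)] mi_word_length[of I1] mi_word_length[of I2] by simp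
  then show ?thesis using I1 I2 by blast
qed

lemma finite_pairs: "finite {(I1, I2). length I1 = 6 \<and> length I2 = 6 \<and> sum_list I1 + sum_list I2 \<le> (m::nat)}"
proof -
  let ?L = "{xs. set xs \<subseteq> {0..m} \<and> length xs = 6}"
  have "finite ?L" by (rule finite_lists_length_eq) simp
  moreover have "{(I1, I2). length I1 = 6 \<and> length I2 = 6 \<and> sum_list I1 + sum_list I2 \<le> m} \<subseteq> ?L \<times> ?L"
  proof clarify
    fix I1 I2 :: "nat list" assume h: "length I1 = 6" "length I2 = 6" "sum_list I1 + sum_list I2 \<le> m"
    have "x \<le> m" if "x \<in> set I1" for x using member_le_sum_list[OF that] h(3) by linarith
    moreover have "x \<le> m" if "x \<in> set I2" for x using member_le_sum_list[OF that] h(3) by linarith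
    ultimately show "I1 \<in> ?L \<and> I2 \<in> ?L" using h by auto
  qed
  ultimately show ?thesis by (meson finite_SigmaI finite_subset)
qed

lemma norm_sum_list_le: "norm (\<Sum>x\<leftarrow>xs. f x) \<le> (\<Sum>x\<leftarrow>xs. norm (f x))"
  by (induction xs) (auto intro: order_trans[OF norm_triangle_ineq])

lemma sum_list_le_len: "(\<And>x. x \<in> set xs \<Longrightarrow> f x \<le> (S::real)) \<Longrightarrow> (\<Sum>x\<leftarrow>xs. f x) \<le> real (length xs) * S"
  by (induction xs) (auto simp: algebra_simps add_mono)



theorem lemma2p3:
  fixes n :: nat
  shows "\<exists>C. \<forall>I (f1 :: pt \<Rightarrow> real) (f2 :: pt \<Rightarrow> complex^2) p.
           length I = 6 \<and> sum_list I = n \<and> smooth f1 \<and> smooth f2 \<and> rad p \<noteq> 0 \<longrightarrow>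
           norm (minus_part p (GammaIh I (\<lambda>q. f1 q *\<^sub>R f2 q) p))
             \<le> C * (\<Sum>(I1, I2) \<in> {(I1, I2). length I1 = 6 \<and> length I2 = 6 \<and>
                                   sum_list I1 + sum_list I2 \<le> sum_list I}.
                    \<bar>GammaI I1 f1 p\<bar> * norm (minus_part p (GammaIh I2 f2 p)))"
proof (intro exI[of _ "2 ^ n"] allI impI)
  fix I and f1 :: "pt \<Rightarrow> real" and f2 :: "pt \<Rightarrow> complex^2" and p
  assume H: "length I = 6 \<and> sum_list I = n \<and> smooth f1 \<and> smooth f2 \<and> rad p \<noteq> 0"
  then have L: "length I = 6" and N: "sum_list I = n" and S1: "smooth f1" and S2: "smooth f2" by auto
  define P where "P = {(I1, I2). length I1 = 6 \<and> length I2 = 6 \<and> sum_list I1 + sum_list I2 \<le> sum_list I}"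
  define T where "T = (\<lambda>(I1, I2). \<bar>GammaI I1 f1 p\<bar> * norm (minus_part p (GammaIh I2 f2 p)))"
  define S where "S = sum T P"
  have fin: "finite P" unfolding P_def by (rule finite_pairs)
  have Tnn: "0 \<le> T x" for x unfolding T_def by (auto simp: case_prod_beta)
  define w where "w = mi_word I"
  have eq: "GammaIh I (\<lambda>q. f1 q *\<^sub>R f2 q) p =
      (\<Sum>ab\<leftarrow>splits w. foldr VF (fst ab) f1 p *\<^sub>R foldr VFh (snd ab) f2 p)"
    unfolding GammaIh_def w_def foldr_leibniz[OF S1 S2] ..
  have mp: "minus_part p (GammaIh I (\<lambda>q. f1 q *\<^sub>R f2 q) p) =
      (\<Sum>ab\<leftarrow>splits w. foldr VF (fst ab) f1 p *\<^sub>R minus_part p (foldr VFh (snd ab) f2 p))"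
    unfolding eq bl_sum_list[OF bl_minus_part] linear_simps(5)[OF bl_minus_part] ..
  have each: "norm (foldr VF (fst ab) f1 p *\<^sub>R minus_part p (foldr VFh (snd ab) f2 p)) \<le> S"
    if ab: "ab \<in> set (splits w)" for ab
  proof -
    obtain I1 I2 where I12: "length I1 = 6" "length I2 = 6" "fst ab = mi_word I1" "snd ab = mi_word I2"
        "sum_list I1 + sum_list I2 = sum_list I"
      using splits_mi[OF L ab[unfolded w_def]] by blast
    have mem: "(I1, I2) \<in> P" unfolding P_def using I12 by simp
    have "norm (foldr VF (fst ab) f1 p *\<^sub>R minus_part p (foldr VFh (snd ab) f2 p)) = T (I1, I2)"
      unfolding T_def GammaI_def GammaIh_def I12(3,4) by simp
    also have "\<dots> \<le> S" unfolding S_def by (rule member_le_sum[OF mem _ fin]) (rule Tnn)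
    finally show ?thesis .
  qed
  have "norm (minus_part p (GammaIh I (\<lambda>q. f1 q *\<^sub>R f2 q) p))
      \<le> (\<Sum>ab\<leftarrow>splits w. norm (foldr VF (fst ab) f1 p *\<^sub>R minus_part p (foldr VFh (snd ab) f2 p)))"
    unfolding mp by (rule norm_sum_list_le)
  also have "\<dots> \<le> real (length (splits w)) * S"
    by (rule sum_list_le_len) (rule each)
  also have "real (length (splits w)) = 2 ^ n"
    unfolding length_splits w_def mi_word_length[OF L] N by simp
  finally show "norm (minus_part p (GammaIh I (\<lambda>q. f1 q *\<^sub>R f2 q) p))
             \<le> 2 ^ n * (\<Sum>(I1, I2) \<in> {(I1, I2). length I1 = 6 \<and> length I2 = 6 \<and>
                                   sum_list I1 + sum_list I2 \<le> sum_list I}.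
                    \<bar>GammaI I1 f1 p\<bar> * norm (minus_part p (GammaIh I2 f2 p)))"
    unfolding S_def T_def P_def .
qed

end
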